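(* Let $R$ be a $*$-ring with unity and $a,b,c\in R$. Then: (1) $a\perp a$ implies $a=0$. (2) $a\perp b$ iff $b\perp a$ iff $a\perp(-b)$. (3) If $a\perp b$ and $c\leq a$, then $c\perp b$. (4) $a\perp b$ iff $a\leq a-b$. (5) If $a\leq b$, then $b-a\leq b$ and $b-a\perp a$. (6) If $a\perp b$, then the only common lower bound of $a$ and $b$ is $0$ (so $a\wedge b=0$), and $a+b$ is an upper bound of both $a$ and $b$. (7) If $a\perp b$ and $(a+b)\perp c$, then $a\perp(b+c)$.
   Context: Natural partial order: $a\leq b$ iff there is $x\in R$ with $a=xa=xb=ax^*=bx^*$. Orthogonality: $a\perp b$ iff there exists $x\in R$ with $xa=a=ax^*$ and $xb=0=bx^*$. *)

theory Defs
  imports Main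
begin

class star_ring = ring_1 +
  fixes star :: "'a \<Rightarrow> 'a"
  assumes star_star: "star (star x) = x"
    and star_add: "star (x + y) = star x + star y"
    and star_mult: "star (x * y) = star y * star x"

definition star_le :: "'a::star_ring \<Rightarrow> 'a \<Rightarrow> bool" where
  "star_le a b \<longleftrightarrow> (\<exists>x. a = x * a \<and> a = x * b \<and> a = a * star x \<and> a = b * star x)"

definition star_orth :: "'a::star_ring \<Rightarrow> 'a \<Rightarrow> bool" where
  "star_orth a b \<longleftrightarrow> (\<exists>x. x * a = a \<and> a * star x = a \<and> x * b = 0 \<and> b * star x = 0)"

end

theory Submission
  imports Defs
begin

lemma star_one_minus: "star (1 - x) = 1 - star (x::'a::star_ring)"
proof -
  have s1: "star (1::'a) = 1"
    by (metis mult_1_left mult_1_right star_mult star_star)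
  have "star (1 - x) + star x = 1" by (metis star_add diff_add_cancel s1)
  thus ?thesis by (metis add_diff_cancel_right')
qed

lemma orth_sym: "star_orth a b \<Longrightarrow> star_orth b (a::'a::star_ring)"
  unfolding star_orth_def
proof (elim exE conjE)
  fix x assume h: "x * a = a" "a * star x = a" "x * b = 0" "b * star x = 0"
  show "\<exists>y. y * b = b \<and> b * star y = b \<and> y * a = 0 \<and> a * star y = 0"
    by (rule exI[of _ "1 - x"]) (simp add: star_one_minus algebra_simps h)
qed

lemma orth_neg: "star_orth a (- b) = star_orth a (b::'a::star_ring)"
  unfolding star_orth_def by simp

lemma orth_le: "star_orth a b \<Longrightarrow> star_le c a \<Longrightarrow> star_orth c (b::'a::star_ring)"
  unfolding star_orth_def star_le_def
proof (elim exE conjE)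
  fix x y assume h: "x * a = a" "a * star x = a" "x * b = 0" "b * star x = 0"
    and g: "c = y * c" "c = y * a" "c = c * star y" "c = a * star y"
  have "x * c = c" by (metis g(4) h(1) mult.assoc)
  moreover have "c * star x = c" by (metis g(2) h(2) mult.assoc)
  ultimately show "\<exists>x. x * c = c \<and> c * star x = c \<and> x * b = 0 \<and> b * star x = 0"
    using h by blast
qed

lemma orth_iff_le: "star_orth a b = star_le a (a - (b::'a::star_ring))"
  unfolding star_orth_def star_le_def
proof
  assume "\<exists>x. x * a = a \<and> a * star x = a \<and> x * b = 0 \<and> b * star x = 0"
  then obtain x where h: "x * a = a" "a * star x = a" "x * b = 0" "b * star x = 0" by blast
  show "\<exists>x. a = x * a \<and> a = x * (a - b) \<and> a = a * star x \<and> a = (a - b) * star x"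
    by (rule exI[of _ x]) (simp add: algebra_simps h)
next
  assume "\<exists>x. a = x * a \<and> a = x * (a - b) \<and> a = a * star x \<and> a = (a - b) * star x"
  then obtain x where h: "a = x * a" "a = x * (a - b)" "a = a * star x" "a = (a - b) * star x" by blast
  have "x * b = 0" using h(1,2) by (simp add: algebra_simps)
  moreover have "b * star x = 0" using h(3,4) by (simp add: algebra_simps)
  ultimately show "\<exists>x. x * a = a \<and> a * star x = a \<and> x * b = 0 \<and> b * star x = 0"
    using h by metis
qed

lemma le_diff: "star_le a b \<Longrightarrow> star_le (b - a) (b::'a::star_ring)"
  unfolding star_le_def
proof (elim exE conjE)
  fix x assume h: "a = x * a" "a = x * b" "a = a * star x" "a = b * star x"
  show "\<exists>y. b - a = y * (b - a) \<and> b - a = y * b \<and> b - a = (b - a) * star y \<and> b - a = b * star y"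
    by (rule exI[of _ "1 - x"]) (simp add: star_one_minus algebra_simps h[symmetric])
qed

lemma le_diff_orth: "star_le a b \<Longrightarrow> star_orth (b - a) (a::'a::star_ring)"
proof -
  assume "star_le a b"
  then obtain x where h: "a = x * a" "a = x * b" "a = a * star x" "a = b * star x"
    unfolding star_le_def by blast
  have "star_orth a (b - a)" unfolding star_orth_def
    by (rule exI[of _ x]) (simp add: algebra_simps h[symmetric])
  thus ?thesis by (rule orth_sym)
qed

lemma orth_glb: "star_orth a b \<Longrightarrow> star_le d a \<Longrightarrow> star_le d b \<Longrightarrow> d = (0::'a::star_ring)"
proof -
  assume o: "star_orth a b" and l1: "star_le d a" and l2: "star_le d b"
  have "star_orth d b" using o l1 by (rule orth_le)
  then obtain z where z: "z * d = d" "z * b = 0" unfolding star_orth_def by blast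
  obtain y where y: "d = b * star y" using l2 unfolding star_le_def by blast
  have "d = z * d" using z by simp
  also have "\<dots> = z * b * star y" by (simp add: y mult.assoc)
  finally show ?thesis using z by simp
qed

lemma star_zero: "star (0::'a::star_ring) = 0"
  by (metis add_cancel_right_right star_add)

lemma zero_le: "star_le 0 (a::'a::star_ring)"
  unfolding star_le_def by (rule exI[of _ 0]) (simp add: star_zero)

lemma orth_add: "star_orth a b \<Longrightarrow> star_orth (a + b) c \<Longrightarrow> star_orth a (b + (c::'a::star_ring))"
proof -
  assume o1: "star_orth a b" and o2: "star_orth (a + b) c"
  have "star_le a (a + b)" using o1 orth_neg orth_iff_le by (metis diff_minus_eq_add)
  hence "star_orth a c" using o2 orth_sym orth_le by blast
  then obtain y where y: "y * a = a" "a * star y = a" "y * c = 0" "c * star y = 0"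
    unfolding star_orth_def by blast
  obtain y' where y': "y' * (a+b) = a+b" "(a+b) * star y' = a+b" "y' * c = 0" "c * star y' = 0"
    using o2 unfolding star_orth_def by blast
  obtain x where x: "x * a = a" "a * star x = a" "x * b = 0" "b * star x = 0"
    using o1 unfolding star_orth_def by blast
  have ya: "y' * a = a" using o1 \<open>star_le a (a+b)\<close> y' by (metis mult.assoc star_le_def)
  have ay: "a * star y' = a" using \<open>star_le a (a+b)\<close> y' by (metis mult.assoc star_le_def)
  have yb: "y' * b = b" using ya y'(1) by (simp add: distrib_left)
  have by': "b * star y' = b" using ay y'(2) by (simp add: distrib_right)
  show ?thesis unfolding star_orth_def
  proof (rule exI[of _ "x * y'"], intro conjI)
    show "x * y' * a = a" by (simp add: mult.assoc ya x)
    show "a * star (x * y') = a" by (simp add: star_mult mult.assoc[symmetric] ay x)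
    show "x * y' * (b + c) = 0" by (simp add: distrib_left mult.assoc yb y' x)
    show "(b + c) * star (x * y') = 0"
      by (simp add: star_mult distrib_right mult.assoc[symmetric] by' y' x)
  qed
qed

theorem mainTheorem6:
  fixes a b c :: "'a::star_ring"
  shows "(star_orth a a \<longrightarrow> a = 0)
    \<and> ((star_orth a b \<longleftrightarrow> star_orth b a) \<and> (star_orth b a \<longleftrightarrow> star_orth a (- b)))
    \<and> (star_orth a b \<and> star_le c a \<longrightarrow> star_orth c b)
    \<and> (star_orth a b \<longleftrightarrow> star_le a (a - b))
    \<and> (star_le a b \<longrightarrow> star_le (b - a) b \<and> star_orth (b - a) a)
    \<and> (star_orth a b \<longrightarrow>
         (\<forall>d. (star_le d a \<and> star_le d b) \<longleftrightarrow> d = 0)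
         \<and> star_le a (a + b) \<and> star_le b (a + b))
    \<and> (star_orth a b \<and> star_orth (a + b) c \<longrightarrow> star_orth a (b + c))"
proof (intro conjI impI)
  show "star_orth a a \<Longrightarrow> a = 0" unfolding star_orth_def by auto
  show "star_orth a b = star_orth b a" using orth_sym by blast
  show "star_orth b a = star_orth a (- b)" using orth_sym orth_neg by blast
  show "star_orth a b \<and> star_le c a \<Longrightarrow> star_orth c b" using orth_le by blast
  show "star_orth a b = star_le a (a - b)" by (rule orth_iff_le)
  show "star_le a b \<Longrightarrow> star_le (b - a) b" by (rule le_diff)
  show "star_le a b \<Longrightarrow> star_orth (b - a) a" by (rule le_diff_orth)
  show "star_orth a b \<Longrightarrow> \<forall>d. (star_le d a \<and> star_le d b) = (d = 0)"
    using orth_glb zero_le by blast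
  show "star_orth a b \<Longrightarrow> star_le a (a + b)"
    using orth_neg orth_iff_le by (metis diff_minus_eq_add)
  show "star_orth a b \<Longrightarrow> star_le b (a + b)"
    using orth_sym orth_neg orth_iff_le by (metis diff_minus_eq_add add.commute)
  show "star_orth a b \<and> star_orth (a + b) c \<Longrightarrow> star_orth a (b + c)"
    using orth_add by blast
qed

end
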